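(* Let $(A,* )$ be an involutive associative algebra over a field $\mathbb{K}$ of characteristic $0$. For $n\ge 1$ let $$iC^n_{\mathrm{Hoch}}(A,A)=\{f\in \mathrm{Hom}(A^{\otimes n},A)\mid f(a_1,\ldots,a_n)^*=(-1)^{\frac{(n-1)(n-2)}{2}} f(a_n^*,\ldots,a_1^* )\ \text{for all } a_i\in A\}.$$ If $m,n\ge 1$, $f\in iC^m_{\mathrm{Hoch}}(A,A)$ and $g\in iC^n_{\mathrm{Hoch}}(A,A)$, then the Gerstenhaber bracket $[f,g]$ lies in $iC^{m+n-1}_{\mathrm{Hoch}}(A,A)$.
   Context: An involutive associative algebra is an associative algebra $A$ with a linear map $*:A\to A$, $a\mapsto a^*$, such that $a^{**}=a$ and $(ab)^*=b^*a^*$ for all $a,b\in A$. For $f\in\mathrm{Hom}(A^{\otimes m},A)$, $g\in \mathrm{Hom}(A^{\otimes n},A)$ and $1\le i\le m$, let $(f\circ_i g)(a_1,\ldots,a_{m+n-1})=f(a_1,\ldots,a_{i-1},g(a_i,\ldots,a_{i+n-1}),a_{i+n},\ldots,a_{m+n-1})$. The Gerstenhaber bracket is $[f,g]=\sum_{i=1}^m(-1)^{(i-1)(n-1)}f\circ_i g-(-1)^{(m-1)(n-1)}\sum_{i=1}^n(-1)^{(i-1)(m-1)}g\circ_i f\in \mathrm{Hom}(A^{\otimes (m+n-1)},A)$. *)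

theory Defs
  imports Main
begin

definition inv_assoc_algebra :: "('k::field \<Rightarrow> 'a::ring \<Rightarrow> 'a) \<Rightarrow> ('a \<Rightarrow> 'a) \<Rightarrow> bool" where
  "inv_assoc_algebra sm st \<longleftrightarrow>
     (\<forall>c x y. sm c (x + y) = sm c x + sm c y) \<and>
     (\<forall>c d x. sm (c + d) x = sm c x + sm d x) \<and>
     (\<forall>c d x. sm c (sm d x) = sm (c * d) x) \<and>
     (\<forall>x. sm 1 x = x) \<and>
     (\<forall>c x y. sm c (x * y) = sm c x * y) \<and>
     (\<forall>c x y. sm c (x * y) = x * sm c y) \<and>
     (\<forall>x y. st (x + y) = st x + st y) \<and>
     (\<forall>c x. st (sm c x) = sm c (st x)) \<and>
     (\<forall>x. st (st x) = x) \<and>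
     (\<forall>x y. st (x * y) = st y * st x)"

text \<open>Elements of Hom(A^{\<otimes>n}, A) are represented as K-multilinear functions on
argument lists of length n (values on lists of other lengths are irrelevant).\<close>

definition multilinear :: "('k::field \<Rightarrow> 'a::ring \<Rightarrow> 'a) \<Rightarrow> nat \<Rightarrow> ('a list \<Rightarrow> 'a) \<Rightarrow> bool" where
  "multilinear sm n f \<longleftrightarrow>
     (\<forall>xs i a b. length xs = n \<longrightarrow> i < n \<longrightarrow>
        f (xs[i := a + b]) = f (xs[i := a]) + f (xs[i := b])) \<and>
     (\<forall>xs i c a. length xs = n \<longrightarrow> i < n \<longrightarrow>
        f (xs[i := sm c a]) = sm c (f (xs[i := a])))"

definition sgn_pow :: "nat \<Rightarrow> 'a::ring \<Rightarrow> 'a" where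
  "sgn_pow k x = (if even k then x else - x)"

definition iC_Hoch :: "('k::field \<Rightarrow> 'a::ring \<Rightarrow> 'a) \<Rightarrow> ('a \<Rightarrow> 'a) \<Rightarrow> nat \<Rightarrow> ('a list \<Rightarrow> 'a) set" where
  "iC_Hoch sm st n = {f. multilinear sm n f \<and>
     (\<forall>as. length as = n \<longrightarrow>
        st (f as) = sgn_pow (((n - 1) * (n - 2)) div 2) (f (rev (map st as))))}"

text \<open>Partial composition f \<circ>_i g, with i 1-based and g of arity n.\<close>
definition pcomp :: "('a list \<Rightarrow> 'a) \<Rightarrow> nat \<Rightarrow> nat \<Rightarrow> ('a list \<Rightarrow> 'a) \<Rightarrow> 'a list \<Rightarrow> 'a" where
  "pcomp f i n g as = f (take (i - 1) as @ [g (take n (drop (i - 1) as))] @ drop (i - 1 + n) as)"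

definition gerst :: "nat \<Rightarrow> ('a::ring list \<Rightarrow> 'a) \<Rightarrow> nat \<Rightarrow> ('a list \<Rightarrow> 'a) \<Rightarrow> 'a list \<Rightarrow> 'a" where
  "gerst m f n g as =
     (\<Sum>i=1..m. sgn_pow ((i - 1) * (n - 1)) (pcomp f i n g as))
     - sgn_pow ((m - 1) * (n - 1)) (\<Sum>i=1..n. sgn_pow ((i - 1) * (m - 1)) (pcomp g i m f as))"

end

theory Submission
  imports Defs
begin

lemma sgn_pow_add: "sgn_pow k (x + y) = sgn_pow k x + sgn_pow k (y::'a::ring)"
  by (simp add: sgn_pow_def)
lemma sgn_pow_neg: "sgn_pow k (- x) = - sgn_pow k (x::'a::ring)"
  by (simp add: sgn_pow_def)
lemma sgn_pow_diff: "sgn_pow k (x - y) = sgn_pow k x - sgn_pow k (y::'a::ring)"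
  by (simp add: sgn_pow_def)
lemma sgn_pow_sgn_pow: "sgn_pow k (sgn_pow l x) = sgn_pow (k + l) (x::'a::ring)"
  by (simp add: sgn_pow_def)
lemma sgn_pow_sum: "sgn_pow k (sum h S) = (\<Sum>i\<in>S. sgn_pow k (h i :: 'a::ring))"
  by (simp add: sgn_pow_def sum_negf)
lemma sgn_pow_cong: "even k = even l \<Longrightarrow> sgn_pow k x = sgn_pow l x"
  by (simp add: sgn_pow_def)

lemma ml_add: "multilinear sm n F \<Longrightarrow> length xs = n \<Longrightarrow> i < n \<Longrightarrow>
  F (xs[i := a + b]) = F (xs[i := a]) + F (xs[i := b])"
  by (simp add: multilinear_def)
lemma ml_sm: "multilinear sm n F \<Longrightarrow> length xs = n \<Longrightarrow> i < n \<Longrightarrow>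
  F (xs[i := sm c a]) = sm c (F (xs[i := a]))"
  by (simp add: multilinear_def)
lemma ml_neg: assumes "multilinear sm n F" "length xs = n" "i < n"
  shows "F (xs[i := - a]) = - F (xs[i := a])"
proof -
  have z: "F (xs[i := 0]) = 0"
    using ml_add[OF assms, of 0 0] by simp
  have "F (xs[i := a + - a]) = F (xs[i := a]) + F (xs[i := - a])"
    using ml_add[OF assms] .
  with z show ?thesis by (simp add: eq_neg_iff_add_eq_0 add.commute)
qed
lemma ml_sgn: assumes "multilinear sm n F" "length xs = n" "i < n"
  shows "F (xs[i := sgn_pow k a]) = sgn_pow k (F (xs[i := a]))"
  using ml_neg[OF assms] by (simp add: sgn_pow_def)
lemma ml_sgn_mid: assumes "multilinear sm n F" "length A + 1 + length B = n"
  shows "F (A @ [sgn_pow k a] @ B) = sgn_pow k (F (A @ [a] @ B))"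
proof -
  have e: "A @ [y] @ B = (A @ [a] @ B)[length A := y]" for y by simp
  have "F ((A @ [a] @ B)[length A := sgn_pow k a]) = sgn_pow k (F ((A @ [a] @ B)[length A := a]))"
    by (rule ml_sgn[OF assms(1)]) (use assms(2) in auto)
  then show ?thesis by (simp only: e[symmetric])
qed

lemma st_props: assumes "inv_assoc_algebra sm st"
  shows "st (x + y) = st x + st y" "st 0 = 0" "st (- x) = - st x" "st (x - y) = st x - st y"
    "st (sum h S) = (\<Sum>i\<in>S. st (h i))" "st (sgn_pow k x) = sgn_pow k (st x)"
proof -
  have a: "\<And>x y. st (x + y) = st x + st y" using assms by (simp add: inv_assoc_algebra_def)
  have z: "st 0 = 0" using a[of 0 0] by simp
  show "st (x + y) = st x + st y" "st 0 = 0" by (simp_all add: a z)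
  show "st (sum h S) = (\<Sum>i\<in>S. st (h i))"
    by (induction S rule: infinite_finite_induct) (simp_all add: a z)
  have n: "st (- x) = - st x" for x
    using a[of "- x" x] z by (simp add: eq_neg_iff_add_eq_0)
  show "st (- x) = - st x" by (rule n)
  show "st (x - y) = st x - st y" using a[of x "- y"] n[of y] by simp
  show "st (sgn_pow k x) = sgn_pow k (st x)" by (simp add: sgn_pow_def n)
qed

lemma pcomp_st:
  assumes inv: "inv_assoc_algebra sm st" and F: "F \<in> iC_Hoch sm st p" and G: "G \<in> iC_Hoch sm st q"
    and i: "1 \<le> i" "i \<le> p" and q: "1 \<le> q" and len: "length as = p + q - 1"
  shows "st (pcomp F i q G as) = sgn_pow ((p-1)*(p-2) div 2 + (q-1)*(q-2) div 2)
           (pcomp F (p+1-i) q G (rev (map st as)))"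
proof -
  define A where "A = take (i-1) as"
  define Y where "Y = take q (drop (i-1) as)"
  define B where "B = drop (i-1+q) as"
  define bs where "bs = rev (map st as)"
  have lY: "length Y = q" using len i q by (simp add: Y_def)
  have lX: "length (A @ [G Y] @ B) = p" using len i q by (simp add: A_def B_def)
  have Fml: "multilinear sm p F" using F by (simp add: iC_Hoch_def)
  have 1: "st (pcomp F i q G as) = sgn_pow ((p-1)*(p-2) div 2) (F (rev (map st B) @ [st (G Y)] @ rev (map st A)))"
    using F lX by (simp add: iC_Hoch_def pcomp_def A_def B_def Y_def)
  have 2: "st (G Y) = sgn_pow ((q-1)*(q-2) div 2) (G (rev (map st Y)))"
    using G lY by (simp add: iC_Hoch_def)
  have 3: "F (rev (map st B) @ [st (G Y)] @ rev (map st A)) =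
     sgn_pow ((q-1)*(q-2) div 2) (F (rev (map st B) @ [G (rev (map st Y))] @ rev (map st A)))"
    unfolding 2 by (rule ml_sgn_mid[OF Fml]) (use lX in simp)
  have 4: "rev (map st B) = take (p-i) bs" using len i q
    by (simp add: B_def bs_def rev_map rev_drop take_map)
  have 5: "rev (map st A) = drop (p-i+q) bs" using len i q
    by (simp add: A_def bs_def rev_map rev_take drop_map)
  have 6: "rev (map st Y) = take q (drop (p-i) bs)" using len i q
    by (simp add: Y_def bs_def rev_map rev_take rev_drop take_drop take_map drop_map)
  have 7: "pcomp F (p+1-i) q G bs = F (take (p-i) bs @ [G (take q (drop (p-i) bs))] @ drop (p-i+q) bs)"
    using i by (simp add: pcomp_def)
  show ?thesis unfolding 1 unfolding 3 unfolding 4 5 6 bs_def[symmetric] 7 by (simp add: sgn_pow_sgn_pow add.commute)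
qed

lemma upd_mid: "(A @ x # B)[length A + Suc k := a] = A @ x # B[k := a]"
  by (induction A) auto

lemma pcomp_ml:
  fixes F G :: "'a::ring list \<Rightarrow> 'a"
  assumes F: "multilinear sm p F" and G: "multilinear sm q G"
    and i: "1 \<le> i" "i \<le> p" and q: "1 \<le> q"
  shows "multilinear sm (p + q - 1) (pcomp F i q G)"
proof -
  define Y where "Y xs = take q (drop (i-1) xs)" for xs :: "'a list"
  define Z where "Z xs = take (i-1) xs @ [G (Y xs)] @ drop (i-1+q) xs" for xs
  have P: "pcomp F i q G xs = F (Z xs)" for xs by (simp add: pcomp_def Z_def Y_def)
  have lZ: "length (Z xs) = p" if "length xs = p + q - 1" for xs
    using that i q by (simp add: Z_def)
  have lY: "length (Y xs) = q" if "length xs = p + q - 1" for xs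
    using that i q by (simp add: Y_def)
  have shape: "(\<exists>k<p. \<forall>a. Z (xs[j:=a]) = (Z xs)[k := a]) \<or>
      (\<exists>l<q. \<forall>a. Z (xs[j:=a]) = (Z xs)[i-1 := G ((Y xs)[l := a])])"
    if "length xs = p + q - 1" "j < p + q - 1" for xs :: "'a list" and j
  proof (cases "j < i - 1")
    case True
    then have "Z (xs[j:=a]) = (Z xs)[j := a]" for a
      using that i q by (simp add: Z_def Y_def take_update_swap list_update_append)
    then show ?thesis using True i by (intro disjI1 exI[of _ j]) auto
  next
    case F1: False
    show ?thesis
    proof (cases "j < i - 1 + q")
      case True
      then have "Z (xs[j:=a]) = (Z xs)[i-1 := G ((Y xs)[j - (i-1) := a])]" for a
        using that i q F1 by (simp add: Z_def Y_def drop_update_swap take_update_swap[of q] list_update_append)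
      then show ?thesis using True F1 by (intro disjI2 exI[of _ "j - (i-1)"]) auto
    next
      case False
      have "Z (xs[j:=a]) = (Z xs)[j + 1 - q := a]" for a
      proof -
        have t1: "take (i-1) (xs[j:=a]) = take (i-1) xs" using F1 by simp
        have t2: "Y (xs[j:=a]) = Y xs" using F1 False
          by (simp add: Y_def drop_update_swap)
        have t3: "drop (i-1+q) (xs[j:=a]) = (drop (i-1+q) xs)[j - (i-1+q) := a]"
          using False by (simp add: drop_update_swap)
        have t4: "(Z xs)[j + 1 - q := a] = take (i-1) xs @ [G (Y xs)] @ (drop (i-1+q) xs)[j - (i-1+q) := a]"
        proof -
          have e: "j + 1 - q = length (take (i-1) xs) + Suc (j - (i-1+q))" using that i q F1 False by simp
          show ?thesis by (simp only: Z_def e append_Cons append_Nil upd_mid)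
        qed
        show ?thesis unfolding t4 by (simp only: Z_def t1 t2 t3)
      qed
      then show ?thesis using False that i q by (intro disjI1 exI[of _ "j + 1 - q"]) auto
    qed
  qed
  show ?thesis unfolding multilinear_def P
  proof (intro conjI allI impI)
    fix xs :: "'a list" and j a b assume l: "length xs = p + q - 1" and j: "j < p + q - 1"
    from shape[OF l j] show "F (Z (xs[j := a + b])) = F (Z (xs[j := a])) + F (Z (xs[j := b]))"
    proof
      assume "\<exists>k<p. \<forall>a. Z (xs[j:=a]) = (Z xs)[k := a]"
      then obtain k where "k < p" "\<And>a. Z (xs[j:=a]) = (Z xs)[k := a]" by blast
      then show ?thesis using ml_add[OF F lZ[OF l]] by simp
    next
      assume "\<exists>l<q. \<forall>a. Z (xs[j:=a]) = (Z xs)[i-1 := G ((Y xs)[l := a])]"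
      then obtain k where "k < q" "\<And>a. Z (xs[j:=a]) = (Z xs)[i-1 := G ((Y xs)[k := a])]" by blast
      then show ?thesis using ml_add[OF F lZ[OF l]] ml_add[OF G lY[OF l]] i by simp
    qed
  next
    fix xs :: "'a list" and j c a assume l: "length xs = p + q - 1" and j: "j < p + q - 1"
    from shape[OF l j] show "F (Z (xs[j := sm c a])) = sm c (F (Z (xs[j := a])))"
    proof
      assume "\<exists>k<p. \<forall>a. Z (xs[j:=a]) = (Z xs)[k := a]"
      then obtain k where "k < p" "\<And>a. Z (xs[j:=a]) = (Z xs)[k := a]" by blast
      then show ?thesis using ml_sm[OF F lZ[OF l]] by simp
    next
      assume "\<exists>l<q. \<forall>a. Z (xs[j:=a]) = (Z xs)[i-1 := G ((Y xs)[l := a])]"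
      then obtain k where "k < q" "\<And>a. Z (xs[j:=a]) = (Z xs)[i-1 := G ((Y xs)[k := a])]" by blast
      then show ?thesis using ml_sm[OF F lZ[OF l]] ml_sm[OF G lY[OF l]] i by simp
    qed
  qed
qed


lemma sm_props: assumes "inv_assoc_algebra sm st"
  shows "sm c (x + y) = sm c x + sm c y" "sm c 0 = 0" "sm c (- x) = - sm c x"
    "sm c (x - y) = sm c x - sm c y" "sm c (sum h S) = (\<Sum>i\<in>S. sm c (h i))"
    "sm c (sgn_pow k x) = sgn_pow k (sm c x)"
proof -
  have a: "\<And>x y. sm c (x + y) = sm c x + sm c y" using assms by (simp add: inv_assoc_algebra_def)
  have z: "sm c 0 = 0" using a[of 0 0] by simp
  show "sm c (x + y) = sm c x + sm c y" "sm c 0 = 0" by (simp_all add: a z)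
  show "sm c (sum h S) = (\<Sum>i\<in>S. sm c (h i))"
    by (induction S rule: infinite_finite_induct) (simp_all add: a z)
  have n: "sm c (- x) = - sm c x" for x
    using a[of "- x" x] z by (simp add: eq_neg_iff_add_eq_0)
  show "sm c (- x) = - sm c x" by (rule n)
  show "sm c (x - y) = sm c x - sm c y" using a[of x "- y"] n[of y] by simp
  show "sm c (sgn_pow k x) = sgn_pow k (sm c x)" by (simp add: sgn_pow_def n)
qed

lemma ml_diff: assumes "inv_assoc_algebra sm st" "multilinear sm n f" "multilinear sm n g"
  shows "multilinear sm n (\<lambda>x. f x - g x)"
  using assms(2,3) unfolding multilinear_def by (simp add: sm_props[OF assms(1)])

lemma ml_sgnpow: assumes "inv_assoc_algebra sm st" "multilinear sm n f"
  shows "multilinear sm n (\<lambda>x. sgn_pow k (f x))"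
  using assms(2) unfolding multilinear_def by (simp add: sm_props[OF assms(1)] sgn_pow_add)

lemma ml_sum: assumes "inv_assoc_algebra sm st" "\<And>i. i \<in> S \<Longrightarrow> multilinear sm n (h i)"
  shows "multilinear sm n (\<lambda>x. \<Sum>i\<in>S. h i x)"
  using assms(2) unfolding multilinear_def by (simp add: sm_props[OF assms(1)] sum.distrib)

lemma tri: "(a + b) * (a + b - 1) div 2 = a * (a - 1) div 2 + b * (b - 1) div 2 + a * (b::nat)"
proof -
  have e: "even (x * (x - 1))" for x :: nat by (cases x) auto
  have "(a + b) * (a + b - 1) = a * (a - 1) + b * (b - 1) + 2 * a * b"
    by (cases a; cases b) (simp_all add: algebra_simps)
  then show ?thesis using e[of a] e[of b] by (auto elim!: evenE)
qed
lemma par: fixes j m n :: nat assumes "1 \<le> j" "j \<le> m" "1 \<le> n"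
  shows "even ((m-j)*(n-1) + ((m-1)*(m-2) div 2 + (n-1)*(n-2) div 2)) =
         even ((m+n-1-1)*(m+n-1-2) div 2 + (j-1)*(n-1))"
proof -
  define k d b where "k = j - 1" "d = m - j" "b = n - 1"
  have m: "m = k + d + 1" unfolding k_d_b_def using assms by linarith
  have j: "j = k + 1" using assms by (simp add: k_d_b_def)
  have n: "n = b + 1" using assms by (simp add: k_d_b_def)
  have 1: "(m+n-1-1)*(m+n-1-2) div 2 = (k+d)*(k+d-1) div 2 + b*(b-1) div 2 + (k+d)*b"
    using tri[of "k+d" b] by (simp add: m n numeral_2_eq_2)
  have 2: "(m-1)*(m-2) div 2 = (k+d)*(k+d-1) div 2" by (simp add: m numeral_2_eq_2)
  have 3: "(n-1)*(n-2) div 2 = b*(b-1) div 2" by (simp add: n numeral_2_eq_2)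
  have 4: "m - j = d" "j - 1 = k" "n - 1 = b" by (simp_all add: m j n)
  have 5: "X + Y + (k+d)*b + k*b = d*b + (X + Y) + 2*(k*b)" for X Y :: nat
    by (simp add: algebra_simps)
  show ?thesis unfolding 1 2 3 unfolding 4 5 by simp
qed

lemma sum_st:
  assumes inv: "inv_assoc_algebra sm st" and F: "F \<in> iC_Hoch sm st p" and G: "G \<in> iC_Hoch sm st q"
    and p: "1 \<le> p" and q: "1 \<le> q" and len: "length as = p + q - 1"
  shows "st (\<Sum>i=1..p. sgn_pow ((i-1)*(q-1)) (pcomp F i q G as)) =
    (\<Sum>i=1..p. sgn_pow ((p+q-1-1)*(p+q-1-2) div 2 + (i-1)*(q-1)) (pcomp F i q G (rev (map st as))))"
proof -
  define bs where "bs = rev (map st as)"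
  define E where "E = (p-1)*(p-2) div 2 + (q-1)*(q-2) div 2"
  define H where "H j = sgn_pow ((p-j)*(q-1) + E) (pcomp F j q G bs)" for j
  have "st (\<Sum>i=1..p. sgn_pow ((i-1)*(q-1)) (pcomp F i q G as)) =
      (\<Sum>i=1..p. H (p + 1 - i))"
    unfolding st_props(5)[OF inv]
  proof (rule sum.cong)
    fix i assume "i \<in> {1..p}"
    then have i: "1 \<le> i" "i \<le> p" by auto
    have e: "p - (p + 1 - i) = i - 1" using i by simp
    show "st (sgn_pow ((i-1)*(q-1)) (pcomp F i q G as)) = H (p + 1 - i)"
      unfolding st_props(6)[OF inv] pcomp_st[OF inv F G i q len] H_def e bs_def E_def
      by (simp add: sgn_pow_sgn_pow)
  qed simp
  also have "\<dots> = (\<Sum>i=1..p. H i)"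
    using sum.atLeastAtMost_rev[of H 1 p] by simp
  also have "\<dots> = (\<Sum>i=1..p. sgn_pow ((p+q-1-1)*(p+q-1-2) div 2 + (i-1)*(q-1)) (pcomp F i q G bs))"
  proof (rule sum.cong)
    fix i assume "i \<in> {1..p}"
    then have i: "1 \<le> i" "i \<le> p" by auto
    show "H i = sgn_pow ((p+q-1-1)*(p+q-1-2) div 2 + (i-1)*(q-1)) (pcomp F i q G bs)"
      unfolding H_def E_def by (rule sgn_pow_cong) (rule par[OF i q])
  qed simp
  finally show ?thesis by (simp add: bs_def)
qed

theorem mainTheorem1:
  fixes sm :: "'k::field_char_0 \<Rightarrow> 'a::ring \<Rightarrow> 'a"
    and st :: "'a \<Rightarrow> 'a"
    and f g :: "'a list \<Rightarrow> 'a"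
    and m n :: nat
  assumes "inv_assoc_algebra sm st"
    and "m \<ge> 1" and "n \<ge> 1"
    and "f \<in> iC_Hoch sm st m"
    and "g \<in> iC_Hoch sm st n"
  shows "gerst m f n g \<in> iC_Hoch sm st (m + n - 1)"
proof -
  note inv = assms(1) and m = assms(2) and n = assms(3) and f = assms(4) and g = assms(5)
  have fml: "multilinear sm m f" using f by (simp add: iC_Hoch_def)
  have gml: "multilinear sm n g" using g by (simp add: iC_Hoch_def)
  have eq: "gerst m f n g = (\<lambda>as. (\<Sum>i=1..m. sgn_pow ((i - 1) * (n - 1)) (pcomp f i n g as))
     - sgn_pow ((m - 1) * (n - 1)) (\<Sum>i=1..n. sgn_pow ((i - 1) * (m - 1)) (pcomp g i m f as)))"
    by (rule ext) (simp add: gerst_def)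
  have nm: "n + m - 1 = m + n - 1" by simp
  have MUL: "multilinear sm (m + n - 1) (gerst m f n g)"
    unfolding eq
  proof (rule ml_diff[OF inv])
    show "multilinear sm (m + n - 1) (\<lambda>x. \<Sum>i = 1..m. sgn_pow ((i - 1) * (n - 1)) (pcomp f i n g x))"
      by (rule ml_sum[OF inv], rule ml_sgnpow[OF inv], rule pcomp_ml[OF fml gml _ _ n]) auto
    show "multilinear sm (m + n - 1) (\<lambda>x. sgn_pow ((m - 1) * (n - 1)) (\<Sum>i = 1..n. sgn_pow ((i - 1) * (m - 1)) (pcomp g i m f x)))"
      unfolding nm[symmetric]
      by (rule ml_sgnpow[OF inv], rule ml_sum[OF inv], rule ml_sgnpow[OF inv], rule pcomp_ml[OF gml fml _ _ m]) auto
  qed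
  have INV: "st (gerst m f n g as) = sgn_pow (((m + n - 1 - 1) * (m + n - 1 - 2)) div 2)
        (gerst m f n g (rev (map st as)))" if len: "length as = m + n - 1" for as
  proof -
    have len2: "length as = n + m - 1" using len by simp
    have e2: "(n+m-1-1)*(n+m-1-2) div 2 = (m+n-1-1)*(m+n-1-2) div 2" by (simp add: add.commute)
    show ?thesis
      unfolding gerst_def st_props(4)[OF inv] st_props(6)[OF inv]
        sum_st[OF inv f g m n len] sum_st[OF inv g f n m len2] e2
      by (simp add: sgn_pow_diff sgn_pow_sum sgn_pow_sgn_pow add_ac)
  qed
  show ?thesis using MUL INV by (simp add: iC_Hoch_def)
qed

end
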